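(* Let $G$ be a finite strongly regular graph that is not isomorphic to $C_3$, $C_4$, $C_5$, nor to a disjoint union of copies of $C_3$. Then there is $m\in\{0,1,2\}$ such that $\mathrm{L}^{(m)}(G)$ is not strongly regular; i.e. applying at most two line graph transformations to $G$ yields a graph that is not strongly regular.
   Context: A finite simple graph on $v\ge1$ vertices is strongly regular with parameters $(v,k,\lambda,\mu)$, where $k,\lambda,\mu$ are nonnegative integers, if every vertex has degree $k$, every pair of adjacent vertices has exactly $\lambda$ common neighbours, and every pair of distinct non-adjacent vertices has exactly $\mu$ common neighbours; by convention the graph with no vertices is not strongly regular. $G$ need not be connected. $\mathrm{L}(G)$ has vertex set $E(G)$, two vertices adjacent iff the corresponding edges share an endpoint; $\mathrm{L}^{(0)}(G)=G$ and $\mathrm{L}^{(m)}=\mathrm{L}\circ\mathrm{L}^{(m-1)}$. $C_n$ is the cycle on $n$ vertices. *)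

theory Defs
  imports Main
begin

type_synonym 'a graph = "'a set \<times> 'a set set"

definition verts :: "'a graph \<Rightarrow> 'a set" where "verts G = fst G"
definition edges :: "'a graph \<Rightarrow> 'a set set" where "edges G = snd G"

definition finite_simple_graph :: "'a graph \<Rightarrow> bool" where
  "finite_simple_graph G \<longleftrightarrow> finite (verts G) \<and>
     (\<forall>e\<in>edges G. e \<subseteq> verts G \<and> card e = 2)"

definition adj :: "'a graph \<Rightarrow> 'a \<Rightarrow> 'a \<Rightarrow> bool" where
  "adj G u v \<longleftrightarrow> {u, v} \<in> edges G"

definition neighbours :: "'a graph \<Rightarrow> 'a \<Rightarrow> 'a set" where
  "neighbours G v = {u \<in> verts G. adj G u v}"

definition srg_params :: "'a graph \<Rightarrow> nat \<Rightarrow> nat \<Rightarrow> nat \<Rightarrow> nat \<Rightarrow> bool" where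
  "srg_params G n k l m \<longleftrightarrow> finite_simple_graph G \<and> card (verts G) = n \<and> n \<ge> 1 \<and>
     (\<forall>v\<in>verts G. card (neighbours G v) = k) \<and>
     (\<forall>u\<in>verts G. \<forall>v\<in>verts G. u \<noteq> v \<and> adj G u v \<longrightarrow>
          card (neighbours G u \<inter> neighbours G v) = l) \<and>
     (\<forall>u\<in>verts G. \<forall>v\<in>verts G. u \<noteq> v \<and> \<not> adj G u v \<longrightarrow>
          card (neighbours G u \<inter> neighbours G v) = m)"

definition strongly_regular :: "'a graph \<Rightarrow> bool" where
  "strongly_regular G \<longleftrightarrow> (\<exists>n k l m. srg_params G n k l m)"

definition line_graph :: "'a graph \<Rightarrow> 'a set graph" where
  "line_graph G = (edges G,
     {{e, f} | e f. e \<in> edges G \<and> f \<in> edges G \<and> e \<noteq> f \<and> e \<inter> f \<noteq> {}})"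

definition graph_iso :: "'a graph \<Rightarrow> 'b graph \<Rightarrow> bool" where
  "graph_iso G H \<longleftrightarrow> (\<exists>f. bij_betw f (verts G) (verts H) \<and>
     (\<forall>u\<in>verts G. \<forall>v\<in>verts G. adj G u v \<longleftrightarrow> adj H (f u) (f v)))"

definition cycle_graph :: "nat \<Rightarrow> nat graph" where
  "cycle_graph n = ({0..<n}, {{i, (i + 1) mod n} | i. i < n})"

definition triangles :: "nat \<Rightarrow> (nat \<times> nat) graph" where
  "triangles k = ({0..<k} \<times> {0..<3},
     {{(i, j), (i, (j + 1) mod 3)} | i j. i < k \<and> j < 3})"

end

theory Submission
  imports Defs
begin


lemma adj_sym: "adj G u v = adj G v u"
  by (simp add: adj_def insert_commute)

lemma adj_irrefl: "finite_simple_graph G \<Longrightarrow> \<not> adj G u u"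
  unfolding finite_simple_graph_def adj_def by fastforce

lemma adj_verts: "finite_simple_graph G \<Longrightarrow> adj G u v \<Longrightarrow> u \<in> verts G \<and> v \<in> verts G"
  unfolding finite_simple_graph_def adj_def by blast

lemma mem_neighbours: "u \<in> neighbours G v \<longleftrightarrow> u \<in> verts G \<and> adj G u v"
  by (simp add: neighbours_def)

lemma fin_edges: "finite_simple_graph G \<Longrightarrow> finite (edges G)"
  unfolding finite_simple_graph_def
  by (meson PowI finite_Pow_iff rev_finite_subset subsetI)

lemma fin_neighbours: "finite_simple_graph G \<Longrightarrow> finite (neighbours G v)"
  unfolding finite_simple_graph_def neighbours_def by simp

lemma edge_2: "finite_simple_graph G \<Longrightarrow> e \<in> edges G \<Longrightarrow> \<exists>a b. e = {a,b} \<and> a \<noteq> b \<and> adj G a b"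
  unfolding finite_simple_graph_def adj_def by (metis card_2_iff)

lemma verts_line[simp]: "verts (line_graph G) = edges G"
  by (simp add: line_graph_def verts_def)

lemma edges_line: "edges (line_graph G) = {{e, f} | e f. e \<in> edges G \<and> f \<in> edges G \<and> e \<noteq> f \<and> e \<inter> f \<noteq> {}}"
  by (simp add: line_graph_def edges_def)

lemma adj_line: "adj (line_graph G) e f \<longleftrightarrow> e \<in> edges G \<and> f \<in> edges G \<and> e \<noteq> f \<and> e \<inter> f \<noteq> {}"
  unfolding adj_def edges_line by (auto simp: doubleton_eq_iff)

lemma fsg_line: "finite_simple_graph G \<Longrightarrow> finite_simple_graph (line_graph G)"
proof -
  assume G: "finite_simple_graph G"
  have "card {e,f} = 2" if "e \<noteq> f" for e f :: "'a set" using that by simp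
  thus ?thesis unfolding finite_simple_graph_def[of "line_graph G"] edges_line verts_line
    using fin_edges[OF G] by blast
qed

lemma neighbours_line: "neighbours (line_graph G) e = {f \<in> edges G. adj (line_graph G) f e}"
  by (simp add: neighbours_def)

lemma card_gt_ex: "finite A \<Longrightarrow> card B < card A \<Longrightarrow> finite B \<Longrightarrow> \<exists>x\<in>A. x \<notin> B"
  by (meson card_mono leD subsetI)

lemma deg3_contra:
  assumes G: "finite_simple_graph G"
    and P: "srg_params (line_graph (line_graph G)) n k l m"
    and uv: "adj G u v" and vw: "adj G v w" and vx: "adj G v x" and wy: "adj G w y"
    and d: "u \<noteq> w" "u \<noteq> x" "w \<noteq> x" "y \<noteq> u" "y \<noteq> v"
  shows False
proof -
  let ?H = "line_graph G" let ?P = "line_graph ?H"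
  have H: "finite_simple_graph ?H" using fsg_line G by blast
  have nl: "u \<noteq> v" "v \<noteq> w" "v \<noteq> x" "w \<noteq> y" using adj_irrefl[OF G] uv vw vx wy by auto
  define e where "e = {u,v}" define f where "f = {v,w}"
  define g1 where "g1 = {v,x}" define g2 where "g2 = {w,y}"
  have eE: "e \<in> edges G" "f \<in> edges G" "g1 \<in> edges G" "g2 \<in> edges G"
    using uv vw vx wy by (auto simp: e_def f_def g1_def g2_def adj_def)
  have ne: "e \<noteq> f" "f \<noteq> g1" "e \<noteq> g1" "f \<noteq> g2" "g1 \<noteq> g2" "e \<inter> g2 = {}"
    using d nl by (auto simp: e_def f_def g1_def g2_def doubleton_eq_iff)
  have ne7: "e \<noteq> g2" using ne(6) e_def by auto
  have meet: "e \<inter> f \<noteq> {}" "f \<inter> g1 \<noteq> {}" "e \<inter> g1 \<noteq> {}" "f \<inter> g2 \<noteq> {}"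
    by (auto simp: e_def f_def g1_def g2_def)
  define E1 where "E1 = {e,f}" define E2 where "E2 = {f,g1}" define E3 where "E3 = {f,g2}"
  define E4 where "E4 = {e,g1}"
  have EH: "E1 \<in> edges ?H" "E2 \<in> edges ?H" "E3 \<in> edges ?H" "E4 \<in> edges ?H"
    unfolding edges_line E1_def E2_def E3_def E4_def using eE ne meet by blast+
  have Ene: "E1 \<noteq> E2" "E1 \<noteq> E3" "E2 \<noteq> E3" "E4 \<noteq> E3" "E4 \<noteq> E1" "E4 \<noteq> E2"
    unfolding E1_def E2_def E3_def E4_def doubleton_eq_iff using ne(1-5) ne7 by blast+
  have ad: "adj ?P E1 E2" "adj ?P E1 E3"
    using EH Ene by (auto simp: adj_line E1_def E2_def E3_def)
  define C12 where "C12 = neighbours ?P E1 \<inter> neighbours ?P E2"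
  define C13 where "C13 = neighbours ?P E1 \<inter> neighbours ?P E3"
  have c12: "card C12 = l" "card C13 = l"
    using P ad EH Ene unfolding srg_params_def C12_def C13_def by auto
  have memC: "F \<in> neighbours ?P A \<longleftrightarrow> F \<in> edges ?H \<and> A \<in> edges ?H \<and> F \<noteq> A \<and> F \<inter> A \<noteq> {}" for F A
    by (auto simp: mem_neighbours adj_line)
  have fin: "finite C12" "finite C13"
    using fin_edges[OF H] by (auto simp: C12_def C13_def memC intro: finite_subset)
  have fE: "f \<in> E1" "f \<in> E2" "f \<in> E3" "e \<in> E1" "g1 \<in> E2" "g2 \<in> E3" "f \<notin> E4"
    "e \<in> E4" "g1 \<in> E4"
    using ne by (auto simp: E1_def E2_def E3_def E4_def)
  have C12m: "F \<in> C12 \<longleftrightarrow> F \<in> edges ?H \<and> F \<noteq> E1 \<and> F \<noteq> E2 \<and> F \<inter> E1 \<noteq> {} \<and> F \<inter> E2 \<noteq> {}" for F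
    unfolding C12_def using EH by (auto simp add: memC)
  have C13m: "F \<in> C13 \<longleftrightarrow> F \<in> edges ?H \<and> F \<noteq> E1 \<and> F \<noteq> E3 \<and> F \<inter> E1 \<noteq> {} \<and> F \<inter> E3 \<noteq> {}" for F
    unfolding C13_def using EH by (auto simp add: memC)
  have E1eq: "E1 = {e,f}" and E2eq: "E2 = {f,g1}" and E3eq: "E3 = {f,g2}"
    by (simp_all add: E1_def E2_def E3_def)
  have eq: "C12 - {E3, E4} = C13 - {E2}"
  proof (rule set_eqI)
    fix F
    show "F \<in> C12 - {E3, E4} \<longleftrightarrow> F \<in> C13 - {E2}"
    proof (cases "F \<in> edges ?H")
      case False thus ?thesis by (simp add: C12m C13m)
    next
      case True
      then obtain p q where F: "F = {p,q}" "p \<in> edges G" "q \<in> edges G" "p \<noteq> q" "p \<inter> q \<noteq> {}"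
        unfolding edges_line by blast
      show ?thesis
      proof (cases "f \<in> F")
        case True
        have "F \<inter> E1 \<noteq> {}" "F \<inter> E2 \<noteq> {}" "F \<inter> E3 \<noteq> {}" "F \<noteq> E4"
          using True fE by blast+
        thus ?thesis using \<open>F \<in> edges ?H\<close> by (auto simp: C12m C13m)
      next
        case False
        have "F \<notin> C13"
        proof
          assume "F \<in> C13"
          hence "F \<inter> E1 \<noteq> {}" "F \<inter> E3 \<noteq> {}" unfolding C13m by blast+
          hence "F \<inter> {e,f} \<noteq> {}" "F \<inter> {f,g2} \<noteq> {}" unfolding E1eq E3eq .
          hence "e \<in> F" "g2 \<in> F" using False by blast+
          hence "e \<in> {p,q}" "g2 \<in> {p,q}" using F(1) by simp_all
          thus False using F(5) ne(6) ne7 by blast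
        qed
        moreover have "F \<notin> C12 - {E3, E4}"
        proof
          assume a: "F \<in> C12 - {E3, E4}"
          hence "F \<in> C12" by blast
          hence "F \<inter> E1 \<noteq> {}" "F \<inter> E2 \<noteq> {}" unfolding C12m by blast+
          hence "F \<inter> {e,f} \<noteq> {}" "F \<inter> {f,g1} \<noteq> {}" unfolding E1eq E2eq .
          hence "e \<in> F" "g1 \<in> F" using False by blast+
          hence "F = {e,g1}" using F(1,4) ne(3) by auto
          thus False using a E4_def by simp
        qed
        ultimately show ?thesis by blast
      qed
    qed
  qed
  have in12: "E3 \<in> C12" "E4 \<in> C12" using EH Ene fE unfolding C12m by blast+
  have in13: "E2 \<in> C13" using EH Ene fE unfolding C13m by blast
  have "card (C12 - {E3,E4}) = card C12 - 2"
    using in12 Ene fin by (simp add: card_Diff_subset)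
  moreover have "card (C13 - {E2}) = card C13 - 1" using in13 fin by simp
  moreover have "card C12 \<ge> 2" "card C13 \<ge> 1"
    using in12 in13 fin Ene card_mono[of C12 "{E3,E4}"]
    by (auto simp: card_gt_0_iff Suc_le_eq)
  ultimately show False using eq c12 by simp
qed



lemma adjN: "finite_simple_graph G \<Longrightarrow> adj G x y \<longleftrightarrow> x \<in> neighbours G y"
  using adj_verts mem_neighbours by metis

lemma iso_from:
  assumes "bij_betw \<phi> (verts H) (verts G)"
    and "\<forall>x\<in>verts H. \<forall>y\<in>verts H. adj H x y \<longleftrightarrow> adj G (\<phi> x) (\<phi> y)"
  shows "graph_iso G H"
proof -
  let ?f = "inv_into (verts H) \<phi>"
  have b: "bij_betw ?f (verts G) (verts H)" using assms(1) by (rule bij_betw_inv_into)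
  have r: "\<phi> (?f u) = u" if "u \<in> verts G" for u
    using that assms(1) by (simp add: bij_betw_def f_inv_into_f)
  have "\<forall>u\<in>verts G. \<forall>v\<in>verts G. adj G u v \<longleftrightarrow> adj H (?f u) (?f v)"
  proof (intro ballI)
    fix u v assume "u \<in> verts G" "v \<in> verts G"
    moreover have "?f u \<in> verts H" "?f v \<in> verts H" using b calculation bij_betw_apply by fastforce+
    ultimately show "adj G u v \<longleftrightarrow> adj H (?f u) (?f v)" using assms(2) r by metis
  qed
  thus ?thesis using b unfolding graph_iso_def by blast
qed

lemma adj_cycle:
  assumes "n \<ge> 3" "i < n" "j < n"
  shows "adj (cycle_graph n) i j \<longleftrightarrow> j = (i+1) mod n \<or> i = (j+1) mod n"
proof
  assume "adj (cycle_graph n) i j"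
  then obtain t where "t < n" "{i,j} = {t, (t+1) mod n}"
    unfolding adj_def cycle_graph_def edges_def by auto
  thus "j = (i+1) mod n \<or> i = (j+1) mod n" by (auto simp: doubleton_eq_iff)
next
  assume "j = (i+1) mod n \<or> i = (j+1) mod n"
  thus "adj (cycle_graph n) i j"
    unfolding adj_def cycle_graph_def edges_def using assms by (auto simp: insert_commute)
qed

lemma cycle_iso:
  assumes "distinct xs" "length xs = n" "n \<ge> 3" "verts G = set xs"
    and "\<forall>i<n. \<forall>j<n. adj G (xs!i) (xs!j) \<longleftrightarrow> (j = (i+1) mod n \<or> i = (j+1) mod n)"
  shows "graph_iso G (cycle_graph n)"
proof (rule iso_from[where \<phi> = "(!) xs"])
  show "bij_betw ((!) xs) (verts (cycle_graph n)) (verts G)"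
    using assms by (intro bij_betw_nth) (auto simp: cycle_graph_def verts_def)
  show "\<forall>x\<in>verts (cycle_graph n). \<forall>y\<in>verts (cycle_graph n). adj (cycle_graph n) x y \<longleftrightarrow> adj G (xs ! x) (xs ! y)"
    using assms adj_cycle[OF assms(3)] by (auto simp: cycle_graph_def verts_def)
qed

lemma all4: "(\<forall>i<(4::nat). P i) \<longleftrightarrow> P 0 \<and> P 1 \<and> P 2 \<and> P 3"
proof -
  have e: "i < 4 \<longleftrightarrow> i = 0 \<or> i = 1 \<or> i = 2 \<or> i = (3::nat)" for i by arith
  show ?thesis
  proof
    assume "\<forall>i<(4::nat). P i" thus "P 0 \<and> P 1 \<and> P 2 \<and> P 3" by simp
  next
    assume "P 0 \<and> P 1 \<and> P 2 \<and> P 3" thus "\<forall>i<(4::nat). P i" unfolding e by blast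
  qed
qed

lemma all5: "(\<forall>i<(5::nat). P i) \<longleftrightarrow> P 0 \<and> P 1 \<and> P 2 \<and> P 3 \<and> P 4"
proof -
  have e: "i < 5 \<longleftrightarrow> i = 0 \<or> i = 1 \<or> i = 2 \<or> i = 3 \<or> i = (4::nat)" for i by arith
  show ?thesis
  proof
    assume "\<forall>i<(5::nat). P i" thus "P 0 \<and> P 1 \<and> P 2 \<and> P 3 \<and> P 4" by simp
  next
    assume "P 0 \<and> P 1 \<and> P 2 \<and> P 3 \<and> P 4" thus "\<forall>i<(5::nat). P i" unfolding e by blast
  qed
qed

lemma mod3_ne: "Suc b mod 3 \<noteq> (b::nat)" by presburger

lemma adj_tri:
  assumes "i < k" "j < 3" "i' < k" "j' < 3"
  shows "adj (triangles k) (i,j) (i',j') \<longleftrightarrow> i = i' \<and> j \<noteq> j'"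
proof
  assume "adj (triangles k) (i,j) (i',j')"
  then obtain a b where "a < k" "b < 3" "{(i,j),(i',j')} = {(a,b),(a,(b+1) mod 3)}"
    unfolding adj_def triangles_def edges_def by auto
  then show "i = i' \<and> j \<noteq> j'" proof -
    have "b \<noteq> Suc b mod 3" "Suc b mod 3 \<noteq> b" using mod3_ne[of b] by auto
    thus ?thesis using \<open>{(i,j),(i',j')} = _\<close> by (auto simp: doubleton_eq_iff)
  qed
next
  assume h: "i = i' \<and> j \<noteq> j'"
  have mem: "{(a,b),(a,(b+1) mod 3)} \<in> edges (triangles k)" if "a < k" "b < 3" for a b
    unfolding triangles_def edges_def snd_conv
    by (rule CollectI, rule exI[of _ a], rule exI[of _ b]) (use that in simp)
  have ii: "i' = i" using h by simp
  have jj: "j = 0 \<or> j = 1 \<or> j = 2" "j' = 0 \<or> j' = 1 \<or> j' = 2" using assms by arith+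
  have "j' = (j+1) mod 3 \<or> j = (j'+1) mod 3"
    using jj h by auto
  thus "adj (triangles k) (i,j) (i',j')"
  proof
    assume "j' = (j+1) mod 3"
    hence "{(i,j),(i',j')} = {(i,j),(i,(j+1) mod 3)}" using ii by (simp only:)
    thus ?thesis using mem[of i j] assms by (simp add: adj_def)
  next
    assume "j = (j'+1) mod 3"
    hence "{(i,j),(i',j')} = {(i',j'),(i',(j'+1) mod 3)}" using ii by (simp only: insert_commute)
    thus ?thesis using mem[of i' j'] assms by (simp add: adj_def)
  qed
qed



lemma deg2:
  fixes G :: "'a graph"
  assumes G: "finite_simple_graph G" and S: "srg_params G n 2 l m"
    and c4: "\<not> graph_iso G (cycle_graph 4)" and c5: "\<not> graph_iso G (cycle_graph 5)"
    and tr: "\<not> (\<exists>k\<ge>1. graph_iso G (triangles k))"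
  shows False
proof -
  define V where "V = verts G"
  define N where "N = neighbours G"
  have finV: "finite V" using G unfolding finite_simple_graph_def V_def by simp
  have deg: "\<And>v. v \<in> V \<Longrightarrow> card (N v) = 2" using S unfolding srg_params_def V_def N_def by blast
  have lam: "\<And>u v. u \<in> V \<Longrightarrow> v \<in> V \<Longrightarrow> u \<noteq> v \<Longrightarrow> adj G u v \<Longrightarrow> card (N u \<inter> N v) = l"
    using S unfolding srg_params_def V_def N_def by blast
  have mu: "\<And>u v. u \<in> V \<Longrightarrow> v \<in> V \<Longrightarrow> u \<noteq> v \<Longrightarrow> \<not> adj G u v \<Longrightarrow> card (N u \<inter> N v) = m"
    using S unfolding srg_params_def V_def N_def by blast
  have Vne: "V \<noteq> {}" using S unfolding srg_params_def V_def by auto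
  have aN: "\<And>x y. adj G x y \<longleftrightarrow> x \<in> N y" using adjN[OF G] N_def by simp
  have sym: "\<And>x y. x \<in> N y \<longleftrightarrow> y \<in> N x" using aN adj_sym by metis
  have irr: "\<And>x. x \<notin> N x" using aN adj_irrefl[OF G] by metis
  have NV: "\<And>y. N y \<subseteq> V" unfolding N_def V_def neighbours_def by auto
  have finN: "\<And>y. finite (N y)" using NV finV finite_subset by blast
  have c2s: "\<And>v x y. v \<in> V \<Longrightarrow> x \<in> N v \<Longrightarrow> y \<in> N v \<Longrightarrow> x \<noteq> y \<Longrightarrow> N v = {x,y}"
  proof -
    fix v x y assume "v \<in> V" "x \<in> N v" "y \<in> N v" "x \<noteq> y"
    thus "N v = {x,y}" using card_subset_eq[OF finN[of v], of "{x,y}"] deg by simp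
  qed
  have two: "\<And>v x. v \<in> V \<Longrightarrow> x \<in> N v \<Longrightarrow> \<exists>c. N v = {x,c} \<and> c \<noteq> x"
  proof -
    fix v x assume v: "v \<in> V" and x: "x \<in> N v"
    have "card (N v - {x}) = 1" using deg[OF v] x finN by simp
    then obtain c where "N v - {x} = {c}" by (meson card_1_singletonE)
    thus "\<exists>c. N v = {x,c} \<and> c \<noteq> x" using x by blast
  qed
  show False
  proof (cases "\<exists>x y z. adj G x y \<and> adj G y z \<and> adj G x z")
    case True
    then obtain x y z where xyz: "adj G x y" "adj G y z" "adj G x z" by blast
    have xV: "x \<in> V" "y \<in> V" using adj_verts[OF G] xyz V_def by auto
    have dxy: "x \<noteq> y" "y \<noteq> z" using xyz adj_irrefl[OF G] by auto
    have yx: "y \<in> N x" using xyz(1) aN[of x y] sym[of x y] by simp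
    have zx: "z \<in> N x" using xyz(3) aN[of x z] sym[of x z] by simp
    have Nx: "N x = {y,z}" using c2s[OF xV(1) yx zx dxy(2)] .
    have zy: "z \<in> N y" using xyz(2) aN[of y z] sym[of y z] by simp
    have "y \<notin> N y" by (rule irr)
    hence "N x \<inter> N y = {z}" using Nx zy by auto
    hence l1: "l = 1" using lam[OF xV dxy(1) xyz(1)] by simp
    have clo: "\<And>w p q. w \<in> V \<Longrightarrow> N w = {p,q} \<Longrightarrow> q \<in> N p"
    proof -
      fix w p q assume w: "w \<in> V" and Nw: "N w = {p,q}"
      have pV: "p \<in> V" using NV Nw by blast
      have "w \<notin> N w" by (rule irr)
      hence pw: "p \<noteq> w" using Nw by auto
      have apw: "adj G p w" using aN[of p w] Nw by simp
      have "card (N p \<inter> N w) = 1" using lam[OF pV w pw apw] l1 by simp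
      hence "N p \<inter> N w \<noteq> {}" by auto
      moreover have "p \<notin> N p" by (rule irr)
      hence "N p \<inter> N w \<subseteq> {q}" using Nw by auto
      ultimately show "q \<in> N p" by blast
    qed
    define T where "T w = insert w (N w)" for w
    have Tprop: "\<And>w y. w \<in> V \<Longrightarrow> y \<in> T w \<Longrightarrow> T y = T w"
    proof -
      fix w y assume w: "w \<in> V" and y: "y \<in> T w"
      show "T y = T w"
      proof (cases "y = w")
        case False
        hence yN: "y \<in> N w" using y T_def by simp
        obtain c where Nw: "N w = {y,c}" "c \<noteq> y" using two[OF w yN] by blast
        have yV: "y \<in> V" using yN NV by blast
        have "c \<in> N y" using clo[OF w Nw(1)] .
        moreover have "w \<in> N y" using yN sym[of w y] by simp
        moreover have "w \<noteq> c" using Nw irr[of w] by auto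
        ultimately have "N y = {w,c}" using c2s[OF yV] by blast
        thus ?thesis using Nw T_def by auto
      qed simp
    qed
    have TV: "\<And>w. w \<in> V \<Longrightarrow> T w \<subseteq> V" using NV T_def by auto
    have card3: "\<And>w. w \<in> V \<Longrightarrow> card (T w) = 3"
    proof -
      fix w assume "w \<in> V"
      thus "card (T w) = 3" using deg[of w] finN[of w] irr[of w] T_def by simp
    qed
    have adjT: "\<And>x y. x \<in> V \<Longrightarrow> y \<in> V \<Longrightarrow> adj G x y \<longleftrightarrow> x \<noteq> y \<and> T x = T y"
    proof -
      fix x y assume x: "x \<in> V" and y: "y \<in> V"
      show "adj G x y \<longleftrightarrow> x \<noteq> y \<and> T x = T y"
      proof
        assume a: "adj G x y"
        hence "x \<in> T y" using aN[of x y] T_def by simp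
        hence "T x = T y" using Tprop[OF y] by blast
        moreover have "x \<noteq> y" using a adj_irrefl[OF G, of x] by auto
        ultimately show "x \<noteq> y \<and> T x = T y" by simp
      next
        assume h: "x \<noteq> y \<and> T x = T y"
        hence "x \<in> T y" using T_def by auto
        thus "adj G x y" using h aN[of x y] T_def by auto
      qed
    qed
    define TT where "TT = T ` V"
    define k where "k = card TT"
    have finTT: "finite TT" using finV TT_def by simp
    obtain t where t: "bij_betw t {0..<k} TT" using ex_bij_betw_nat_finite[OF finTT] k_def by blast
    define en where "en X = (SOME h. bij_betw h {0..<3::nat} X)" for X :: "'a set"
    have enX: "\<And>X. X \<in> TT \<Longrightarrow> bij_betw (en X) {0..<3} X"
    proof -
      fix X assume "X \<in> TT"
      then obtain w where w: "w \<in> V" "X = T w" using TT_def by blast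
      have "finite X" using w TV finV finite_subset by metis
      hence "\<exists>h. bij_betw h {0..<3::nat} X" using ex_bij_betw_nat_finite card3 w by metis
      thus "bij_betw (en X) {0..<3} X" unfolding en_def by (rule someI_ex)
    qed
    define \<phi> where "\<phi> p = en (t (fst p)) (snd p)" for p
    have tin: "\<And>i. i < k \<Longrightarrow> t i \<in> TT" using t bij_betw_apply by fastforce
    have phiT: "\<And>i j. i < k \<Longrightarrow> j < 3 \<Longrightarrow> \<phi> (i,j) \<in> V \<and> T (\<phi> (i,j)) = t i"
    proof -
      fix i j :: nat assume i: "i < k" and j: "j < 3"
      obtain w where w: "w \<in> V" "t i = T w" using tin[OF i] TT_def by blast
      have "\<phi> (i,j) \<in> t i" using enX[OF tin[OF i]] j bij_betw_apply unfolding \<phi>_def by fastforce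
      hence x: "\<phi> (i,j) \<in> T w" using w(2) by simp
      have "T (\<phi> (i,j)) = T w" using Tprop[OF w(1) x] .
      moreover have "\<phi> (i,j) \<in> V" using TV[OF w(1)] x by blast
      ultimately show "\<phi> (i,j) \<in> V \<and> T (\<phi> (i,j)) = t i" using w(2) by simp
    qed
    have verts_tri: "verts (triangles k) = {0..<k} \<times> {0..<3}" by (simp add: triangles_def verts_def)
    have inj: "inj_on \<phi> ({0..<k} \<times> {0..<3})"
    proof (rule inj_onI)
      fix p q assume p: "p \<in> {0..<k} \<times> {0..<3}" and q: "q \<in> {0..<k} \<times> {0..<3}" and e: "\<phi> p = \<phi> q"
      obtain i j i' j' where pq: "p = (i,j)" "q = (i',j')" by (cases p, cases q) auto
      have r: "i < k" "j < 3" "i' < k" "j' < 3" using p q pq by auto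
      have "t i = t i'" using phiT[OF r(1,2)] phiT[OF r(3,4)] e pq by metis
      hence ii: "i = i'" using t r unfolding bij_betw_def inj_on_def by auto
      have "en (t i) j = en (t i) j'" using e pq ii \<phi>_def by simp
      hence "j = j'" using enX[OF tin[OF r(1)]] r unfolding bij_betw_def inj_on_def by auto
      thus "p = q" using pq ii by simp
    qed
    have img: "\<phi> ` ({0..<k} \<times> {0..<3}) = V"
    proof
      show "\<phi> ` ({0..<k} \<times> {0..<3}) \<subseteq> V" using phiT by auto
      show "V \<subseteq> \<phi> ` ({0..<k} \<times> {0..<3})"
      proof
        fix x assume x: "x \<in> V"
        have "T x \<in> TT" using x TT_def by blast
        then obtain i where i: "i < k" "t i = T x" using t unfolding bij_betw_def by auto
        have "x \<in> t i" using i T_def by simp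
        then obtain j where j: "j < 3" "en (t i) j = x"
          using enX[OF tin[OF i(1)]] unfolding bij_betw_def by (metis atLeastLessThan_iff imageE)
        thus "x \<in> \<phi> ` ({0..<k} \<times> {0..<3})" using i unfolding \<phi>_def by force
      qed
    qed
    have bij: "bij_betw \<phi> (verts (triangles k)) (verts G)"
      using inj img verts_tri V_def unfolding bij_betw_def by simp
    have adjok: "\<forall>x\<in>verts (triangles k). \<forall>y\<in>verts (triangles k).
        adj (triangles k) x y \<longleftrightarrow> adj G (\<phi> x) (\<phi> y)"
    proof (intro ballI)
      fix p q assume p: "p \<in> verts (triangles k)" and q: "q \<in> verts (triangles k)"
      obtain i j i' j' where pq: "p = (i,j)" "q = (i',j')" by (cases p, cases q) auto
      have r: "i < k" "j < 3" "i' < k" "j' < 3" using p q pq verts_tri by auto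
      have "adj G (\<phi> p) (\<phi> q) \<longleftrightarrow> \<phi> p \<noteq> \<phi> q \<and> T (\<phi> p) = T (\<phi> q)"
        using adjT phiT r pq by simp
      also have "\<dots> \<longleftrightarrow> p \<noteq> q \<and> t i = t i'"
      proof -
        have e1: "\<phi> p = \<phi> q \<longleftrightarrow> p = q" using inj_on_eq_iff[OF inj] p q verts_tri by simp
        have e2: "T (\<phi> p) = t i" "T (\<phi> q) = t i'" using phiT r pq by simp_all
        show ?thesis using e1 e2 by simp
      qed
      also have "\<dots> \<longleftrightarrow> i = i' \<and> j \<noteq> j'"
      proof -
        have it: "inj_on t {0..<k}" using t by (simp add: bij_betw_def)
        have "t i = t i' \<longleftrightarrow> i = i'" using inj_on_eq_iff[OF it] r by simp
        thus ?thesis using pq by auto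
      qed
      finally show "adj (triangles k) p q \<longleftrightarrow> adj G (\<phi> p) (\<phi> q)"
        using adj_tri[OF r] pq by simp
    qed
    have "graph_iso G (triangles k)" using iso_from[OF bij adjok] .
    moreover have "k \<ge> 1" using Vne finTT k_def TT_def by (simp add: Suc_le_eq card_gt_0_iff)
    ultimately show False using tr by blast
  next
    case False
    hence nt: "\<And>x y z. adj G x y \<Longrightarrow> adj G y z \<Longrightarrow> \<not> adj G x z" by blast
    obtain v where v: "v \<in> V" using Vne by blast
    obtain a b where Nv: "N v = {a,b}" "a \<noteq> b" using deg[OF v] by (meson card_2_iff)
    have abV: "a \<in> V" "b \<in> V" using Nv NV by auto
    have av: "a \<in> N v" "b \<in> N v" using Nv by auto
    have "adj G a v" "adj G v b" using av aN[of a v] aN[of v b] sym[of v b] by simp_all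
    hence nab: "\<not> adj G a b" using nt by blast
    have mab: "card (N a \<inter> N b) = m" using mu[OF abV Nv(2) nab] .
    obtain c where Na: "N a = {v,c}" "c \<noteq> v" using two[OF abV(1)] av sym[of a v] by blast
    obtain d where Nb: "N b = {v,d}" "d \<noteq> v" using two[OF abV(2)] av sym[of b v] by blast
    have cdV: "c \<in> V" "d \<in> V" using Na Nb NV by auto
    have va: "v \<noteq> a" "v \<noteq> b" using av irr[of v] by auto
    have ac: "a \<noteq> c" "b \<noteq> d" using Na Nb irr[of a] irr[of b] by auto
    have cb: "c \<noteq> b" "d \<noteq> a" using Na Nb nab aN[of b a] aN[of a b] sym[of a b] by auto
    show False
    proof (cases "c = d")
      case True
      have m2: "m = 2" using mab Na Nb True by simp
      have "a \<in> N c" "b \<in> N c" using Na Nb True sym[of c a] sym[of c b] by auto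
      hence Nc: "N c = {a,b}" using c2s[OF cdV(1)] Nv(2) by blast
      have Vs: "V = set [v,a,c,b]"
      proof
        show "set [v,a,c,b] \<subseteq> V" using v abV cdV by auto
        show "V \<subseteq> set [v,a,c,b]"
        proof
          fix z assume z: "z \<in> V"
          show "z \<in> set [v,a,c,b]"
          proof (rule ccontr)
            assume zn: "z \<notin> set [v,a,c,b]"
            have "\<not> adj G z v" using zn Nv aN[of z v] by auto
            hence "card (N z \<inter> N v) = 2" using mu[OF z v] zn m2 by auto
            moreover have "N z \<inter> N v \<subseteq> {a,b}" using Nv by auto
            ultimately have "N z \<inter> N v = {a,b}"
              using card_subset_eq[of "{a,b}" "N z \<inter> N v"] Nv(2) by simp
            hence "z \<in> N a" using sym[of z a] by blast
            thus False using Na zn by auto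
          qed
        qed
      qed
      have dist: "distinct [v,a,c,b]" using va ac cb Nv(2) Na(2) True by auto
      have "\<forall>i<4. \<forall>j<4. adj G ([v,a,c,b]!i) ([v,a,c,b]!j) \<longleftrightarrow> (j = (i+1) mod 4 \<or> i = (j+1) mod 4)"
        unfolding all4 using Nv Na Nb Nc True va ac cb Na(2) by (simp add: aN)
      hence "graph_iso G (cycle_graph 4)"
        by (intro cycle_iso[OF dist _ _ Vs[unfolded V_def]]) simp_all
      thus False using c4 by simp
    next
      case False
      have m1: "m = 1"
      proof -
        have "N a \<inter> N b = {v}" using Na Nb False by auto
        thus ?thesis using mab by simp
      qed
      have ncb: "\<not> adj G c b" using Nb False cb Na(2) aN[of c b] by auto
      have "card (N c \<inter> N b) = 1" using mu[OF cdV(1) abV(2) cb(1) ncb] m1 by simp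
      hence "N c \<inter> N b \<noteq> {}" by auto
      moreover have "v \<notin> N c" using Nv Na cb ac sym[of v c] by auto
      ultimately have dc: "d \<in> N c" using Nb by auto
      have "a \<in> N c" using Na sym[of c a] by auto
      hence Nc: "N c = {a,d}" using c2s[OF cdV(1)] dc cb by blast
      have "b \<in> N d" "c \<in> N d" using Nb dc sym[of d b] sym[of d c] by auto
      hence Nd: "N d = {b,c}" using c2s[OF cdV(2)] cb by blast
      have Vs: "V = set [v,a,c,d,b]"
      proof
        show "set [v,a,c,d,b] \<subseteq> V" using v abV cdV by auto
        show "V \<subseteq> set [v,a,c,d,b]"
        proof
          fix z assume z: "z \<in> V"
          show "z \<in> set [v,a,c,d,b]"
          proof (rule ccontr)
            assume zn: "z \<notin> set [v,a,c,d,b]"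
            have "\<not> adj G z v" using zn Nv aN[of z v] by auto
            hence "card (N z \<inter> N v) = 1" using mu[OF z v] zn m1 by auto
            hence "N z \<inter> N v \<noteq> {}" by auto
            hence "z \<in> N a \<or> z \<in> N b" using Nv sym[of z a] sym[of z b] by auto
            thus False using Na Nb zn by auto
          qed
        qed
      qed
      have dist: "distinct [v,a,c,d,b]" using va ac cb Nv(2) Na(2) Nb(2) False by auto
      have "\<forall>i<5. \<forall>j<5. adj G ([v,a,c,d,b]!i) ([v,a,c,d,b]!j) \<longleftrightarrow> (j = (i+1) mod 5 \<or> i = (j+1) mod 5)"
        unfolding all5 using Nv Na Nb Nc Nd False va ac cb Na(2) Nb(2) by (simp add: aN)
      hence "graph_iso G (cycle_graph 5)"
        by (intro cycle_iso[OF dist _ _ Vs[unfolded V_def]]) simp_all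
      thus False using c5 by simp
    qed
  qed
qed



lemma edge_split: "finite_simple_graph G \<Longrightarrow> p \<in> edges G \<Longrightarrow> z \<in> p \<Longrightarrow> \<exists>b. p = {z,b} \<and> b \<noteq> z"
proof -
  assume G: "finite_simple_graph G" and p: "p \<in> edges G" and z: "z \<in> p"
  have "card p = 2" using G p unfolding finite_simple_graph_def by blast
  hence "card (p - {z}) = 1" using z by (simp add: card_Diff_singleton_if)
  then obtain b where "p - {z} = {b}" by (meson card_1_singletonE)
  thus ?thesis using z by blast
qed

theorem mainTheorem10:
  fixes G :: "'a graph"
  assumes "finite_simple_graph G"
    and "strongly_regular G"
    and "\<not> graph_iso G (cycle_graph 3)"
    and "\<not> graph_iso G (cycle_graph 4)"
    and "\<not> graph_iso G (cycle_graph 5)"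
    and "\<not> (\<exists>k\<ge>1. graph_iso G (triangles k))"
  shows "\<not> strongly_regular G \<or> \<not> strongly_regular (line_graph G)
         \<or> \<not> strongly_regular (line_graph (line_graph G))"
proof (rule ccontr)
  assume "\<not> ?thesis"
  hence s1: "strongly_regular (line_graph G)" and s2: "strongly_regular (line_graph (line_graph G))"
    by auto
  have G: "finite_simple_graph G" by (rule assms(1))
  obtain n k l m where S: "srg_params G n k l m" using assms(2) unfolding strongly_regular_def by blast
  obtain n2 k2 l2 m2 where S2: "srg_params (line_graph (line_graph G)) n2 k2 l2 m2"
    using s2 unfolding strongly_regular_def by blast
  have deg: "\<And>v. v \<in> verts G \<Longrightarrow> card (neighbours G v) = k" using S unfolding srg_params_def by blast
  have "edges (line_graph G) \<noteq> {}"
    using S2 unfolding srg_params_def by auto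
  then obtain F where F: "F \<in> edges (line_graph G)" by blast
  then obtain p q where pq: "F = {p,q}" "p \<in> edges G" "q \<in> edges G" "p \<noteq> q" "p \<inter> q \<noteq> {}"
    unfolding edges_line by blast
  then obtain z where z: "z \<in> p" "z \<in> q" by blast
  obtain b where b: "p = {z,b}" "b \<noteq> z" using edge_split[OF G pq(2) z(1)] by blast
  obtain c where c: "q = {z,c}" "c \<noteq> z" using edge_split[OF G pq(3) z(2)] by blast
  have bc: "b \<noteq> c" using b c pq(4) by blast
  have zV: "z \<in> verts G" using G pq(2) z(1) unfolding finite_simple_graph_def by blast
  have "b \<in> neighbours G z" "c \<in> neighbours G z"
    using b c pq(2,3) adj_verts[OF G] unfolding mem_neighbours adj_def by (auto simp: insert_commute)
  hence "card {b,c} \<le> card (neighbours G z)"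
    using fin_neighbours[OF G] by (intro card_mono) auto
  hence k2: "k \<ge> 2" using bc deg[OF zV] by simp
  show False
  proof (cases "k = 2")
    case True
    thus False using deg2[OF G _ assms(4) assms(5) assms(6)] S by blast
  next
    case False
    hence k3: "k \<ge> 3" using k2 by simp
    let ?N = "neighbours G"
    have fN: "\<And>v. finite (?N v)" using fin_neighbours[OF G] .
    obtain w where w: "w \<in> ?N z" using card_gt_ex[OF fN, of "{}" z] deg[OF zV] k3 by auto
    obtain u where u: "u \<in> ?N z" "u \<notin> {w}" using card_gt_ex[OF fN, of "{w}" z] deg[OF zV] k3 by auto
    have "card {u,w} \<le> 2" by (simp add: card_insert_le_m1)
    then obtain x where x: "x \<in> ?N z" "x \<notin> {u,w}"
      using card_gt_ex[OF fN, of "{u,w}" z] deg[OF zV] k3 by force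
    have wV: "w \<in> verts G" using w mem_neighbours by metis
    have "card {u,z} \<le> 2" by (simp add: card_insert_le_m1)
    then obtain y where y: "y \<in> ?N w" "y \<notin> {u,z}"
      using card_gt_ex[OF fN, of "{u,z}" w] deg[OF wV] k3 by force
    have a1: "adj G u z" using u(1) mem_neighbours by metis
    have a2: "adj G z w" using w mem_neighbours adj_sym by metis
    have a3: "adj G z x" using x(1) mem_neighbours adj_sym by metis
    have a4: "adj G w y" using y(1) mem_neighbours adj_sym by metis
    show False
      using deg3_contra[OF G S2 a1 a2 a3 a4] u x y by auto
  qed
qed

end
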